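(* Let $\mathbb A$ be an abelian category with enough projective objects and let $(f_0,f_1):a\to b$ be a morphism in $\mathbb A^{[1]}_c$, with $a:A_1\to A_0$, $b:B_1\to B_0$. Let $K=A_0\times_{B_0}B_1$ be the pull-back of $f_0$ and $b$, with projections $k:K\to A_0$, $\kappa:K\to B_1$, and let $k':A_1\to K$ be the morphism with $kk'=a$, $\kappa k'=f_1$. Choose an epimorphism $\epsilon:C_0\to K$ with $C_0$ projective, and let $C_1=C_0\times_K A_1$ be the pull-back of $\epsilon$ and $k'$, with projections $c:C_1\to C_0$ and $\epsilon':C_1\to A_1$. Then $(k\epsilon,\epsilon'):c\to a$ is a morphism of $\mathbb A^{[1]}_c$, $\kappa\epsilon$ is a 2-arrow $(f_0,f_1)\circ(k\epsilon,\epsilon')\Rightarrow 0$, and the triple $(c,(k\epsilon,\epsilon'),\kappa\epsilon)$ is a 2-kernel of $(f_0,f_1)$ in $\mathbb A^{[1]}_c$.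
   Context: Let $\mathbb A$ be an abelian category. The 2-category $\mathbb A^{[1]}$ has as objects the morphisms $a:A_1\to A_0$ of $\mathbb A$. For objects $a:A_1\to A_0$ and $b:B_1\to B_0$, a morphism $a\to b$ is a pair $(f_0,f_1)$ of morphisms $f_i:A_i\to B_i$ of $\mathbb A$ with $b f_1=f_0 a$; composition is componentwise. A 2-arrow $(f_0,f_1)\Rightarrow(g_0,g_1)$ between morphisms $a\to b$ is a morphism $\alpha:A_0\to B_1$ of $\mathbb A$ with $f_1-g_1=\alpha a$ and $f_0-g_0=b\alpha$; vertical composition is addition of such $\alpha$'s, and whiskering is given by $(h_0,h_1)\circ\alpha=h_1\alpha$ and $\alpha\circ(e_0,e_1)=\alpha e_0$. All 2-arrows are invertible. $\mathbb A^{[1]}_c$ is the full 2-subcategory of $\mathbb A^{[1]}$ on the objects $a:A_1\to A_0$ with $A_0$ projective in $\mathbb A$. In a 2-category $\mathcal C$ of this kind (with zero morphisms), a 2-kernel of $f:a\to b$ is a triple $(k,u:k\to a,\kappa:fu\Rightarrow0)$ such that for every object $x$ of $\mathcal C$ the functor $v\mapsto (uv, \kappa v)$ from $\mathbf{Hom}(x,k)$ to the groupoid of pairs $(w\in\mathbf{Hom}(x,a),\ \phi:fw\Rightarrow 0)$ (morphisms: 2-arrows $w\Rightarrow w'$ compatible with the $\phi$'s) is an equivalence of groupoids. *)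

theory Defs
  imports Main
begin

text \<open>A category with objects of type 'o and morphisms of type 'm.
  Cmp C g f is the composite g after f (defined when Cod f = Dom g).
  Add, Neg, Zer give the abelian-group structure on hom-sets.\<close>

record ('o, 'm) acat =
  Obj :: "'o set"
  Mor :: "'m set"
  Dom :: "'m \<Rightarrow> 'o"
  Cod :: "'m \<Rightarrow> 'o"
  Idm :: "'o \<Rightarrow> 'm"
  Cmp :: "'m \<Rightarrow> 'm \<Rightarrow> 'm"
  Add :: "'m \<Rightarrow> 'm \<Rightarrow> 'm"
  Neg :: "'m \<Rightarrow> 'm"
  Zer :: "'o \<Rightarrow> 'o \<Rightarrow> 'm"

definition hom :: "('o, 'm) acat \<Rightarrow> 'o \<Rightarrow> 'o \<Rightarrow> 'm set" where
  "hom C X Y = {f \<in> Mor C. Dom C f = X \<and> Cod C f = Y}"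

definition category :: "('o, 'm) acat \<Rightarrow> bool" where
  "category C \<longleftrightarrow>
     (\<forall>f \<in> Mor C. Dom C f \<in> Obj C \<and> Cod C f \<in> Obj C) \<and>
     (\<forall>X \<in> Obj C. Idm C X \<in> hom C X X) \<and>
     (\<forall>X Y Z f g. f \<in> hom C X Y \<longrightarrow> g \<in> hom C Y Z \<longrightarrow> Cmp C g f \<in> hom C X Z) \<and>
     (\<forall>W X Y Z f g h. f \<in> hom C W X \<longrightarrow> g \<in> hom C X Y \<longrightarrow> h \<in> hom C Y Z \<longrightarrow>
         Cmp C h (Cmp C g f) = Cmp C (Cmp C h g) f) \<and>
     (\<forall>X Y f. f \<in> hom C X Y \<longrightarrow> Cmp C f (Idm C X) = f \<and> Cmp C (Idm C Y) f = f)"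

definition preadditive :: "('o, 'm) acat \<Rightarrow> bool" where
  "preadditive C \<longleftrightarrow> category C \<and>
     (\<forall>X \<in> Obj C. \<forall>Y \<in> Obj C. Zer C X Y \<in> hom C X Y) \<and>
     (\<forall>X Y f g. f \<in> hom C X Y \<longrightarrow> g \<in> hom C X Y \<longrightarrow> Add C f g \<in> hom C X Y) \<and>
     (\<forall>X Y f. f \<in> hom C X Y \<longrightarrow> Neg C f \<in> hom C X Y) \<and>
     (\<forall>X Y f g h. f \<in> hom C X Y \<longrightarrow> g \<in> hom C X Y \<longrightarrow> h \<in> hom C X Y \<longrightarrow>
         Add C (Add C f g) h = Add C f (Add C g h)) \<and>
     (\<forall>X Y f g. f \<in> hom C X Y \<longrightarrow> g \<in> hom C X Y \<longrightarrow> Add C f g = Add C g f) \<and>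
     (\<forall>X Y f. f \<in> hom C X Y \<longrightarrow> Add C f (Zer C X Y) = f \<and> Add C f (Neg C f) = Zer C X Y) \<and>
     (\<forall>X Y Z f g h. f \<in> hom C X Y \<longrightarrow> g \<in> hom C X Y \<longrightarrow> h \<in> hom C Y Z \<longrightarrow>
         Cmp C h (Add C f g) = Add C (Cmp C h f) (Cmp C h g)) \<and>
     (\<forall>X Y Z f g h. f \<in> hom C X Y \<longrightarrow> g \<in> hom C Y Z \<longrightarrow> h \<in> hom C Y Z \<longrightarrow>
         Cmp C (Add C g h) f = Add C (Cmp C g f) (Cmp C h f))"

definition mono :: "('o, 'm) acat \<Rightarrow> 'm \<Rightarrow> bool" where
  "mono C m \<longleftrightarrow> m \<in> Mor C \<and>
     (\<forall>W g h. g \<in> hom C W (Dom C m) \<longrightarrow> h \<in> hom C W (Dom C m) \<longrightarrow>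
        Cmp C m g = Cmp C m h \<longrightarrow> g = h)"

definition epi :: "('o, 'm) acat \<Rightarrow> 'm \<Rightarrow> bool" where
  "epi C e \<longleftrightarrow> e \<in> Mor C \<and>
     (\<forall>W g h. g \<in> hom C (Cod C e) W \<longrightarrow> h \<in> hom C (Cod C e) W \<longrightarrow>
        Cmp C g e = Cmp C h e \<longrightarrow> g = h)"

definition is_kernel :: "('o, 'm) acat \<Rightarrow> 'm \<Rightarrow> 'm \<Rightarrow> bool" where
  "is_kernel C f k \<longleftrightarrow> f \<in> Mor C \<and> k \<in> hom C (Dom C k) (Dom C f) \<and>
     Cmp C f k = Zer C (Dom C k) (Cod C f) \<and>
     (\<forall>W \<in> Obj C. \<forall>g \<in> hom C W (Dom C f). Cmp C f g = Zer C W (Cod C f) \<longrightarrow>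
        (\<exists>!h. h \<in> hom C W (Dom C k) \<and> Cmp C k h = g))"

definition is_cokernel :: "('o, 'm) acat \<Rightarrow> 'm \<Rightarrow> 'm \<Rightarrow> bool" where
  "is_cokernel C f q \<longleftrightarrow> f \<in> Mor C \<and> q \<in> hom C (Cod C f) (Cod C q) \<and>
     Cmp C q f = Zer C (Dom C f) (Cod C q) \<and>
     (\<forall>W \<in> Obj C. \<forall>g \<in> hom C (Cod C f) W. Cmp C g f = Zer C (Dom C f) W \<longrightarrow>
        (\<exists>!h. h \<in> hom C (Cod C q) W \<and> Cmp C h q = g))"

definition zero_object :: "('o, 'm) acat \<Rightarrow> 'o \<Rightarrow> bool" where
  "zero_object C Z \<longleftrightarrow> Z \<in> Obj C \<and>
     (\<forall>X \<in> Obj C. (\<exists>!f. f \<in> hom C Z X) \<and> (\<exists>!f. f \<in> hom C X Z))"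

definition is_product :: "('o, 'm) acat \<Rightarrow> 'o \<Rightarrow> 'o \<Rightarrow> 'o \<Rightarrow> 'm \<Rightarrow> 'm \<Rightarrow> bool" where
  "is_product C X Y P p q \<longleftrightarrow> P \<in> Obj C \<and> p \<in> hom C P X \<and> q \<in> hom C P Y \<and>
     (\<forall>W \<in> Obj C. \<forall>g \<in> hom C W X. \<forall>h \<in> hom C W Y.
        (\<exists>!u. u \<in> hom C W P \<and> Cmp C p u = g \<and> Cmp C q u = h))"

definition abelian :: "('o, 'm) acat \<Rightarrow> bool" where
  "abelian C \<longleftrightarrow> preadditive C \<and>
     (\<exists>Z. zero_object C Z) \<and>
     (\<forall>X \<in> Obj C. \<forall>Y \<in> Obj C. \<exists>P p q. is_product C X Y P p q) \<and>
     (\<forall>f \<in> Mor C. (\<exists>k. is_kernel C f k) \<and> (\<exists>q. is_cokernel C f q)) \<and>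
     (\<forall>m. mono C m \<longrightarrow> (\<exists>g. is_kernel C g m)) \<and>
     (\<forall>e. epi C e \<longrightarrow> (\<exists>g. is_cokernel C g e))"

definition projective :: "('o, 'm) acat \<Rightarrow> 'o \<Rightarrow> bool" where
  "projective C P \<longleftrightarrow> P \<in> Obj C \<and>
     (\<forall>X Y e g. e \<in> hom C X Y \<longrightarrow> epi C e \<longrightarrow> g \<in> hom C P Y \<longrightarrow>
        (\<exists>h. h \<in> hom C P X \<and> Cmp C e h = g))"

definition enough_projectives :: "('o, 'm) acat \<Rightarrow> bool" where
  "enough_projectives C \<longleftrightarrow>
     (\<forall>X \<in> Obj C. \<exists>P e. projective C P \<and> e \<in> hom C P X \<and> epi C e)"

definition is_pullback :: "('o, 'm) acat \<Rightarrow> 'm \<Rightarrow> 'm \<Rightarrow> 'o \<Rightarrow> 'm \<Rightarrow> 'm \<Rightarrow> bool" where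
  "is_pullback C f g P p q \<longleftrightarrow> f \<in> Mor C \<and> g \<in> Mor C \<and> Cod C f = Cod C g \<and>
     P \<in> Obj C \<and> p \<in> hom C P (Dom C f) \<and> q \<in> hom C P (Dom C g) \<and>
     Cmp C f p = Cmp C g q \<and>
     (\<forall>W \<in> Obj C. \<forall>h1 \<in> hom C W (Dom C f). \<forall>h2 \<in> hom C W (Dom C g).
        Cmp C f h1 = Cmp C g h2 \<longrightarrow>
        (\<exists>!u. u \<in> hom C W P \<and> Cmp C p u = h1 \<and> Cmp C q u = h2))"

text \<open>An object of A^[1] is a morphism a : A1 \<rightarrow> A0 (A1 = Dom a, A0 = Cod a).
  A morphism a \<rightarrow> b is a pair (f0, f1).\<close>

definition obj1 :: "('o, 'm) acat \<Rightarrow> 'm \<Rightarrow> bool" where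
  "obj1 C a \<longleftrightarrow> a \<in> Mor C"

definition obj1c :: "('o, 'm) acat \<Rightarrow> 'm \<Rightarrow> bool" where
  "obj1c C a \<longleftrightarrow> a \<in> Mor C \<and> projective C (Cod C a)"

definition arr1 :: "('o, 'm) acat \<Rightarrow> 'm \<Rightarrow> 'm \<Rightarrow> 'm \<times> 'm \<Rightarrow> bool" where
  "arr1 C a b f \<longleftrightarrow> obj1 C a \<and> obj1 C b \<and>
     fst f \<in> hom C (Cod C a) (Cod C b) \<and> snd f \<in> hom C (Dom C a) (Dom C b) \<and>
     Cmp C b (snd f) = Cmp C (fst f) a"

definition comp1 :: "('o, 'm) acat \<Rightarrow> 'm \<times> 'm \<Rightarrow> 'm \<times> 'm \<Rightarrow> 'm \<times> 'm" where
  "comp1 C g f = (Cmp C (fst g) (fst f), Cmp C (snd g) (snd f))"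

definition zero1 :: "('o, 'm) acat \<Rightarrow> 'm \<Rightarrow> 'm \<Rightarrow> 'm \<times> 'm" where
  "zero1 C a b = (Zer C (Cod C a) (Cod C b), Zer C (Dom C a) (Dom C b))"

definition diff :: "('o, 'm) acat \<Rightarrow> 'm \<Rightarrow> 'm \<Rightarrow> 'm" where
  "diff C f g = Add C f (Neg C g)"

definition twoarr :: "('o, 'm) acat \<Rightarrow> 'm \<Rightarrow> 'm \<Rightarrow> 'm \<times> 'm \<Rightarrow> 'm \<times> 'm \<Rightarrow> 'm \<Rightarrow> bool" where
  "twoarr C a b f g \<alpha> \<longleftrightarrow> arr1 C a b f \<and> arr1 C a b g \<and>
     \<alpha> \<in> hom C (Cod C a) (Dom C b) \<and>
     diff C (snd f) (snd g) = Cmp C \<alpha> a \<and>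
     diff C (fst f) (fst g) = Cmp C b \<alpha>"

text \<open>2-kernel of f : a \<rightarrow> b in A^[1]_c: the triple (k, u : k \<rightarrow> a, kap : f u \<Rightarrow> 0)
  such that for every object x of A^[1]_c the functor
  v \<mapsto> (u v, kap v) (on 2-arrows: alpha \<mapsto> u alpha = snd u \<cdot> alpha)
  from Hom(x,k) to the groupoid of pairs (w, phi : f w \<Rightarrow> 0) is an equivalence
  of groupoids, i.e. faithful, full and essentially surjective.
  A morphism (w,phi) \<rightarrow> (w',phi') of the target groupoid is a 2-arrow
  beta : w \<Rightarrow> w' with phi = phi' + (f beta) (vertical composition is addition,
  whiskering f beta = snd f \<cdot> beta). Whiskering kap v = kap \<cdot> fst v.\<close>
definition is_2kernel_c ::
  "('o, 'm) acat \<Rightarrow> 'm \<Rightarrow> 'm \<Rightarrow> 'm \<times> 'm \<Rightarrow> 'm \<Rightarrow> 'm \<times> 'm \<Rightarrow> 'm \<Rightarrow> bool" where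
  "is_2kernel_c C a b f k u \<kappa> \<longleftrightarrow>
     obj1c C a \<and> obj1c C b \<and> arr1 C a b f \<and>
     obj1c C k \<and> arr1 C k a u \<and> twoarr C k b (comp1 C f u) (zero1 C k b) \<kappa> \<and>
     (\<forall>x. obj1c C x \<longrightarrow>
        \<comment> \<open>faithful\<close>
        (\<forall>v v' \<alpha> \<alpha>'. twoarr C x k v v' \<alpha> \<longrightarrow> twoarr C x k v v' \<alpha>' \<longrightarrow>
            Cmp C (snd u) \<alpha> = Cmp C (snd u) \<alpha>' \<longrightarrow> \<alpha> = \<alpha>') \<and>
        \<comment> \<open>full\<close>
        (\<forall>v v' \<beta>. arr1 C x k v \<longrightarrow> arr1 C x k v' \<longrightarrow>
            twoarr C x a (comp1 C u v) (comp1 C u v') \<beta> \<longrightarrow>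
            Cmp C \<kappa> (fst v) = Add C (Cmp C \<kappa> (fst v')) (Cmp C (snd f) \<beta>) \<longrightarrow>
            (\<exists>\<alpha>. twoarr C x k v v' \<alpha> \<and> Cmp C (snd u) \<alpha> = \<beta>)) \<and>
        \<comment> \<open>essentially surjective\<close>
        (\<forall>w \<phi>. arr1 C x a w \<longrightarrow> twoarr C x b (comp1 C f w) (zero1 C x b) \<phi> \<longrightarrow>
            (\<exists>v \<beta>. arr1 C x k v \<and> twoarr C x a (comp1 C u v) w \<beta> \<and>
               Cmp C \<kappa> (fst v) = Add C \<phi> (Cmp C (snd f) \<beta>))))"

end

theory Submission imports Defs begin
lemma catD:
  assumes "category C"
  shows cat_objs: "f \<in> hom C X Y \<Longrightarrow> X \<in> Obj C \<and> Y \<in> Obj C"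
    and cat_cmp: "f \<in> hom C X Y \<Longrightarrow> g \<in> hom C Y Z \<Longrightarrow> Cmp C g f \<in> hom C X Z"
    and cat_assoc: "f \<in> hom C W X \<Longrightarrow> g \<in> hom C X Y \<Longrightarrow> h \<in> hom C Y Z \<Longrightarrow>
         Cmp C h (Cmp C g f) = Cmp C (Cmp C h g) f"
  using assms unfolding category_def hom_def by blast+

lemma mor_hom: "f \<in> Mor C \<Longrightarrow> f \<in> hom C (Dom C f) (Cod C f)"
  unfolding hom_def by simp

lemma paD:
  assumes "preadditive C"
  shows pa_cat: "category C"
    and pa_zer: "X \<in> Obj C \<Longrightarrow> Y \<in> Obj C \<Longrightarrow> Zer C X Y \<in> hom C X Y"
    and pa_add: "f \<in> hom C X Y \<Longrightarrow> g \<in> hom C X Y \<Longrightarrow> Add C f g \<in> hom C X Y"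
    and pa_neg: "f \<in> hom C X Y \<Longrightarrow> Neg C f \<in> hom C X Y"
    and pa_assoc: "f \<in> hom C X Y \<Longrightarrow> g \<in> hom C X Y \<Longrightarrow> h \<in> hom C X Y \<Longrightarrow>
         Add C (Add C f g) h = Add C f (Add C g h)"
    and pa_comm: "f \<in> hom C X Y \<Longrightarrow> g \<in> hom C X Y \<Longrightarrow> Add C f g = Add C g f"
    and pa_z: "f \<in> hom C X Y \<Longrightarrow> Add C f (Zer C X Y) = f"
    and pa_inv: "f \<in> hom C X Y \<Longrightarrow> Add C f (Neg C f) = Zer C X Y"
    and pa_dl: "f \<in> hom C X Y \<Longrightarrow> g \<in> hom C X Y \<Longrightarrow> h \<in> hom C Y Z \<Longrightarrow>
         Cmp C h (Add C f g) = Add C (Cmp C h f) (Cmp C h g)"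
    and pa_dr: "f \<in> hom C X Y \<Longrightarrow> g \<in> hom C Y Z \<Longrightarrow> h \<in> hom C Y Z \<Longrightarrow>
         Cmp C (Add C g h) f = Add C (Cmp C g f) (Cmp C h f)"
  using assms unfolding preadditive_def by (simp_all)

lemma idem_zero:
  assumes pa: "preadditive C" and z: "z \<in> hom C X Y" and e: "Add C z z = z"
  shows "z = Zer C X Y"
proof -
  have n: "Neg C z \<in> hom C X Y" using pa z by (rule pa_neg)
  have "z = Add C z (Add C z (Neg C z))" using pa_z[OF pa z] pa_inv[OF pa z] by simp
  also have "\<dots> = Add C (Add C z z) (Neg C z)" using pa_assoc[OF pa z z n] by simp
  also have "\<dots> = Zer C X Y" using e pa_inv[OF pa z] by simp
  finally show ?thesis .
qed

lemma neg_unique: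
  assumes pa: "preadditive C" and a: "a \<in> hom C X Y" and b: "b \<in> hom C X Y"
    and s: "Add C a b = Zer C X Y"
  shows "b = Neg C a"
proof -
  have n: "Neg C a \<in> hom C X Y" using pa a by (rule pa_neg)
  have "b = Add C b (Add C a (Neg C a))" using pa_z[OF pa b] pa_inv[OF pa a] by simp
  also have "\<dots> = Add C (Add C a b) (Neg C a)" using pa_assoc[OF pa b a n] pa_comm[OF pa a b] by simp
  also have "\<dots> = Add C (Neg C a) (Zer C X Y)" using s pa_comm[OF pa n] pa_zer[OF pa] catD(1)[OF pa_cat[OF pa] a] by simp
  also have "\<dots> = Neg C a" using pa_z[OF pa n] .
  finally show ?thesis .
qed

lemma cmp_zer_r:
  assumes pa: "preadditive C" and h: "h \<in> hom C Y Z" and X: "X \<in> Obj C"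
  shows "Cmp C h (Zer C X Y) = Zer C X Z"
proof -
  have Y: "Y \<in> Obj C" "Z \<in> Obj C" using catD(1)[OF pa_cat[OF pa] h] by auto
  have z: "Zer C X Y \<in> hom C X Y" using pa_zer[OF pa X Y(1)] .
  have hz: "Cmp C h (Zer C X Y) \<in> hom C X Z" using catD(2)[OF pa_cat[OF pa] z h] .
  have "Add C (Cmp C h (Zer C X Y)) (Cmp C h (Zer C X Y)) = Cmp C h (Zer C X Y)"
    using pa_dl[OF pa z z h] pa_z[OF pa z] by simp
  then show ?thesis using idem_zero[OF pa hz] by simp
qed

lemma cmp_zer_l:
  assumes pa: "preadditive C" and h: "h \<in> hom C X Y" and Z: "Z \<in> Obj C"
  shows "Cmp C (Zer C Y Z) h = Zer C X Z"
proof -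
  have Y: "X \<in> Obj C" "Y \<in> Obj C" using catD(1)[OF pa_cat[OF pa] h] by auto
  have z: "Zer C Y Z \<in> hom C Y Z" using pa_zer[OF pa Y(2) Z] .
  have hz: "Cmp C (Zer C Y Z) h \<in> hom C X Z" using catD(2)[OF pa_cat[OF pa] h z] .
  have "Add C (Cmp C (Zer C Y Z) h) (Cmp C (Zer C Y Z) h) = Cmp C (Zer C Y Z) h"
    using pa_dr[OF pa h z z] pa_z[OF pa z] by simp
  then show ?thesis using idem_zero[OF pa hz] by simp
qed

lemma diff_hom: "preadditive C \<Longrightarrow> f \<in> hom C X Y \<Longrightarrow> g \<in> hom C X Y \<Longrightarrow> diff C f g \<in> hom C X Y"
  unfolding diff_def by (meson pa_add pa_neg)

lemma diff_self: "preadditive C \<Longrightarrow> f \<in> hom C X Y \<Longrightarrow> diff C f f = Zer C X Y"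
  unfolding diff_def by (rule pa_inv)

lemma neg_zer:
  assumes pa: "preadditive C" and X: "X \<in> Obj C" and Y: "Y \<in> Obj C"
  shows "Neg C (Zer C X Y) = Zer C X Y"
proof -
  have z: "Zer C X Y \<in> hom C X Y" using pa_zer[OF pa X Y] .
  have "Add C (Zer C X Y) (Zer C X Y) = Zer C X Y" using pa_z[OF pa z] .
  then show ?thesis using neg_unique[OF pa z z] by simp
qed

lemma diff_zer: "preadditive C \<Longrightarrow> f \<in> hom C X Y \<Longrightarrow> diff C f (Zer C X Y) = f"
  unfolding diff_def using neg_zer pa_z catD(1) pa_cat by metis

lemma cmp_neg_l:
  assumes pa: "preadditive C" and f: "f \<in> hom C X Y" and h: "h \<in> hom C Y Z"
  shows "Cmp C h (Neg C f) = Neg C (Cmp C h f)"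
proof -
  have n: "Neg C f \<in> hom C X Y" using pa f by (rule pa_neg)
  have X: "X \<in> Obj C" using catD(1)[OF pa_cat[OF pa] f] by auto
  have "Add C (Cmp C h f) (Cmp C h (Neg C f)) = Zer C X Z"
    using pa_dl[OF pa f n h] pa_inv[OF pa f] cmp_zer_r[OF pa h X] by simp
  then show ?thesis using neg_unique[OF pa catD(2)[OF pa_cat[OF pa] f h] catD(2)[OF pa_cat[OF pa] n h]] by simp
qed

lemma cmp_neg_r:
  assumes pa: "preadditive C" and f: "f \<in> hom C X Y" and h: "h \<in> hom C Y Z"
  shows "Cmp C (Neg C h) f = Neg C (Cmp C h f)"
proof -
  have n: "Neg C h \<in> hom C Y Z" using pa h by (rule pa_neg)
  have X: "Z \<in> Obj C" using catD(1)[OF pa_cat[OF pa] h] by auto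
  have "Add C (Cmp C h f) (Cmp C (Neg C h) f) = Zer C X Z"
    using pa_dr[OF pa f h n] pa_inv[OF pa h] cmp_zer_l[OF pa f X] by simp
  then show ?thesis using neg_unique[OF pa catD(2)[OF pa_cat[OF pa] f h] catD(2)[OF pa_cat[OF pa] f n]] by simp
qed

lemma cmp_diff_l:
  assumes pa: "preadditive C" and f: "f \<in> hom C X Y" and g: "g \<in> hom C X Y" and h: "h \<in> hom C Y Z"
  shows "Cmp C h (diff C f g) = diff C (Cmp C h f) (Cmp C h g)"
  unfolding diff_def using pa_dl[OF pa f pa_neg[OF pa g] h] cmp_neg_l[OF pa g h] by simp

lemma cmp_diff_r:
  assumes pa: "preadditive C" and f: "f \<in> hom C X Y" and g: "g \<in> hom C Y Z" and h: "h \<in> hom C Y Z"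
  shows "Cmp C (diff C g h) f = diff C (Cmp C g f) (Cmp C h f)"
  unfolding diff_def using pa_dr[OF pa f g pa_neg[OF pa h]] cmp_neg_r[OF pa f h] by simp

lemma diff_add:
  assumes pa: "preadditive C" and q: "q \<in> hom C X Y" and r: "r \<in> hom C X Y"
  shows "diff C (Add C q r) q = r"
proof -
  have n: "Neg C q \<in> hom C X Y" using pa q by (rule pa_neg)
  have "diff C (Add C q r) q = Add C (Add C r q) (Neg C q)" unfolding diff_def using pa_comm[OF pa q r] by simp
  also have "\<dots> = Add C r (Zer C X Y)" using pa_assoc[OF pa r q n] pa_inv[OF pa q] by simp
  also have "\<dots> = r" using pa_z[OF pa r] .
  finally show ?thesis .
qed

lemma pb_uniq:
  assumes cat: "category C" and pb: "is_pullback C f g P p q"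
    and u1: "u1 \<in> hom C W P" and u2: "u2 \<in> hom C W P"
    and e1: "Cmp C p u1 = Cmp C p u2" and e2: "Cmp C q u1 = Cmp C q u2"
  shows "u1 = u2"
proof -
  have W: "W \<in> Obj C" using catD(1)[OF cat u1] by auto
  have p: "p \<in> hom C P (Dom C f)" and q: "q \<in> hom C P (Dom C g)"
    and f: "f \<in> hom C (Dom C f) (Cod C f)" and g: "g \<in> hom C (Dom C g) (Cod C f)"
    and sq: "Cmp C f p = Cmp C g q"
    and U: "\<forall>W \<in> Obj C. \<forall>h1 \<in> hom C W (Dom C f). \<forall>h2 \<in> hom C W (Dom C g).
        Cmp C f h1 = Cmp C g h2 \<longrightarrow>
        (\<exists>!u. u \<in> hom C W P \<and> Cmp C p u = h1 \<and> Cmp C q u = h2)"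
    using pb unfolding is_pullback_def hom_def by auto
  have h1: "Cmp C p u1 \<in> hom C W (Dom C f)" using catD(2)[OF cat u1 p] .
  have h2: "Cmp C q u1 \<in> hom C W (Dom C g)" using catD(2)[OF cat u1 q] .
  have "Cmp C f (Cmp C p u1) = Cmp C g (Cmp C q u1)"
    using catD(3)[OF cat u1 p f] catD(3)[OF cat u1 q g] sq by simp
  then have "\<exists>!u. u \<in> hom C W P \<and> Cmp C p u = Cmp C p u1 \<and> Cmp C q u = Cmp C q u1"
    using U W h1 h2 by blast
  then show ?thesis using u1 u2 e1 e2 by metis
qed

lemma pb_ex:
  assumes cat: "category C" and pb: "is_pullback C f g P p q"
    and h1: "h1 \<in> hom C W (Dom C f)" and h2: "h2 \<in> hom C W (Dom C g)"
    and e: "Cmp C f h1 = Cmp C g h2"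
  obtains u where "u \<in> hom C W P" "Cmp C p u = h1" "Cmp C q u = h2"
proof -
  have W: "W \<in> Obj C" using catD(1)[OF cat h1] by auto
  then show ?thesis using that pb h1 h2 e unfolding is_pullback_def by blast
qed

theorem mainTheorem11:
  fixes C :: "('o, 'm) acat"
    and a b f0 f1 k \<kappa> k' \<epsilon> c \<epsilon>' :: 'm
    and K C0 C1 :: 'o
  assumes abel: "abelian C"
    and enough: "enough_projectives C"
    and a_obj: "obj1c C a"
    and b_obj: "obj1c C b"
    and f_arr: "arr1 C a b (f0, f1)"
    and K_pb: "is_pullback C f0 b K k \<kappa>"
    and k'_hom: "k' \<in> hom C (Dom C a) K"
    and k'_1: "Cmp C k k' = a"
    and k'_2: "Cmp C \<kappa> k' = f1"
    and C0_proj: "projective C C0"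
    and \<epsilon>_hom: "\<epsilon> \<in> hom C C0 K"
    and \<epsilon>_epi: "epi C \<epsilon>"
    and C1_pb: "is_pullback C \<epsilon> k' C1 c \<epsilon>'"
  shows "obj1c C c \<and> arr1 C c a (Cmp C k \<epsilon>, \<epsilon>')
    \<and> twoarr C c b (comp1 C (f0, f1) (Cmp C k \<epsilon>, \<epsilon>')) (zero1 C c b) (Cmp C \<kappa> \<epsilon>)
    \<and> is_2kernel_c C a b (f0, f1) c (Cmp C k \<epsilon>, \<epsilon>') (Cmp C \<kappa> \<epsilon>)"
proof -
  have pa: "preadditive C" using abel unfolding abelian_def by blast
  have cat: "category C" using pa by (rule pa_cat)
  note cmp = catD(2)[OF cat] and ass = catD(3)[OF cat] and objs = catD(1)[OF cat]
  define A0 where "A0 = Cod C a"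
  define A1 where "A1 = Dom C a"
  define B0 where "B0 = Cod C b"
  define B1 where "B1 = Dom C b"
  have a: "a \<in> hom C A1 A0" using a_obj unfolding obj1c_def A0_def A1_def hom_def by auto
  have b: "b \<in> hom C B1 B0" using b_obj unfolding obj1c_def B0_def B1_def hom_def by auto
  have f0: "f0 \<in> hom C A0 B0" and f1: "f1 \<in> hom C A1 B1" and fsq: "Cmp C b f1 = Cmp C f0 a"
    using f_arr unfolding arr1_def A0_def A1_def B0_def B1_def by auto
  have k: "k \<in> hom C K A0" and kap: "\<kappa> \<in> hom C K B1" and Ksq: "Cmp C f0 k = Cmp C b \<kappa>"
    using K_pb f0 unfolding is_pullback_def hom_def B1_def by auto
  have k': "k' \<in> hom C A1 K" using k'_hom A1_def by simp
  have c: "c \<in> hom C C1 C0" and e': "\<epsilon>' \<in> hom C C1 A1" and Csq: "Cmp C \<epsilon> c = Cmp C k' \<epsilon>'"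
    using C1_pb \<epsilon>_hom k' unfolding is_pullback_def hom_def by auto
  have e: "\<epsilon> \<in> hom C C0 K" by (rule \<epsilon>_hom)
  have ke: "Cmp C k \<epsilon> \<in> hom C C0 A0" using cmp[OF e k] .
  have kape: "Cmp C \<kappa> \<epsilon> \<in> hom C C0 B1" using cmp[OF e kap] .
  have Obs: "A0 \<in> Obj C" "A1 \<in> Obj C" "B0 \<in> Obj C" "B1 \<in> Obj C" "C0 \<in> Obj C" "C1 \<in> Obj C" "K \<in> Obj C"
    using objs[OF a] objs[OF b] objs[OF c] objs[OF k] by auto
  have cobj: "Dom C c = C1" "Cod C c = C0" using c unfolding hom_def by auto
  have adom: "Dom C a = A1" "Cod C a = A0" "Dom C b = B1" "Cod C b = B0" using A0_def A1_def B0_def B1_def by auto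
  have H1: "obj1c C c" using c C0_proj unfolding obj1c_def hom_def by auto
  have sq1: "Cmp C a \<epsilon>' = Cmp C (Cmp C k \<epsilon>) c"
  proof -
    have "Cmp C a \<epsilon>' = Cmp C k (Cmp C k' \<epsilon>')" using ass[OF e' k' k] k'_1 by simp
    also have "\<dots> = Cmp C (Cmp C k \<epsilon>) c" using Csq ass[OF c e k] by simp
    finally show ?thesis .
  qed
  have H2: "arr1 C c a (Cmp C k \<epsilon>, \<epsilon>')"
    unfolding arr1_def obj1_def using c a ke e' sq1 cobj adom unfolding hom_def by auto
  have H3: "twoarr C c b (comp1 C (f0, f1) (Cmp C k \<epsilon>, \<epsilon>')) (zero1 C c b) (Cmp C \<kappa> \<epsilon>)"
  proof -
    have x1: "Cmp C f0 (Cmp C k \<epsilon>) \<in> hom C C0 B0" using cmp[OF ke f0] .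
    have x2: "Cmp C f1 \<epsilon>' \<in> hom C C1 B1" using cmp[OF e' f1] .
    have s1: "Cmp C b (Cmp C f1 \<epsilon>') = Cmp C (Cmp C f0 (Cmp C k \<epsilon>)) c"
      using ass[OF e' f1 b] fsq ass[OF e' a f0] sq1 ass[OF c ke f0] by simp
    have z1: "Cmp C b (Zer C C1 B1) = Zer C C1 B0" using cmp_zer_r[OF pa b Obs(6)] .
    have z2: "Cmp C (Zer C C0 B0) c = Zer C C1 B0" using cmp_zer_l[OF pa c Obs(3)] .
    have d1: "Cmp C f1 \<epsilon>' = Cmp C (Cmp C \<kappa> \<epsilon>) c"
      using k'_2 ass[OF e' k' kap] Csq ass[OF c e kap] by simp
    have d2: "Cmp C f0 (Cmp C k \<epsilon>) = Cmp C b (Cmp C \<kappa> \<epsilon>)"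
      using ass[OF e k f0] Ksq ass[OF e kap b] by simp
    show ?thesis unfolding twoarr_def comp1_def zero1_def
      apply (simp add: cobj adom)
      using H2 x1 x2 s1 z1 z2 d1 d2 diff_zer[OF pa x1] diff_zer[OF pa x2]
        pa_zer[OF pa Obs(5) Obs(3)] pa_zer[OF pa Obs(6) Obs(4)] kape b_obj
      unfolding arr1_def obj1_def obj1c_def by (simp add: cobj adom)
  qed
  have FA: "\<forall>x. obj1c C x \<longrightarrow>
        (\<forall>v v' \<alpha> \<alpha>'. twoarr C x c v v' \<alpha> \<longrightarrow> twoarr C x c v v' \<alpha>' \<longrightarrow>
            Cmp C (snd (Cmp C k \<epsilon>, \<epsilon>')) \<alpha> = Cmp C (snd (Cmp C k \<epsilon>, \<epsilon>')) \<alpha>' \<longrightarrow> \<alpha> = \<alpha>') \<and>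
        (\<forall>v v' \<beta>. arr1 C x c v \<longrightarrow> arr1 C x c v' \<longrightarrow>
            twoarr C x a (comp1 C (Cmp C k \<epsilon>, \<epsilon>') v) (comp1 C (Cmp C k \<epsilon>, \<epsilon>') v') \<beta> \<longrightarrow>
            Cmp C (Cmp C \<kappa> \<epsilon>) (fst v) = Add C (Cmp C (Cmp C \<kappa> \<epsilon>) (fst v')) (Cmp C (snd (f0, f1)) \<beta>) \<longrightarrow>
            (\<exists>\<alpha>. twoarr C x c v v' \<alpha> \<and> Cmp C (snd (Cmp C k \<epsilon>, \<epsilon>')) \<alpha> = \<beta>)) \<and>
        (\<forall>w \<phi>. arr1 C x a w \<longrightarrow> twoarr C x b (comp1 C (f0, f1) w) (zero1 C x b) \<phi> \<longrightarrow>
            (\<exists>v \<beta>. arr1 C x c v \<and> twoarr C x a (comp1 C (Cmp C k \<epsilon>, \<epsilon>') v) w \<beta> \<and>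
               Cmp C (Cmp C \<kappa> \<epsilon>) (fst v) = Add C \<phi> (Cmp C (snd (f0, f1)) \<beta>)))"
  proof (rule allI, rule impI, intro conjI)
    fix x assume xo: "obj1c C x"
    define X0 where "X0 = Cod C x"
    define X1 where "X1 = Dom C x"
    have x: "x \<in> hom C X1 X0" using xo unfolding obj1c_def X0_def X1_def hom_def by auto
    have X0p: "projective C X0" using xo unfolding obj1c_def X0_def by auto
    have xd: "Dom C x = X1" "Cod C x = X0" using X0_def X1_def by auto
    have XO: "X0 \<in> Obj C" "X1 \<in> Obj C" using objs[OF x] by auto
    show "\<forall>v v' \<alpha> \<alpha>'. twoarr C x c v v' \<alpha> \<longrightarrow> twoarr C x c v v' \<alpha>' \<longrightarrow>
            Cmp C (snd (Cmp C k \<epsilon>, \<epsilon>')) \<alpha> = Cmp C (snd (Cmp C k \<epsilon>, \<epsilon>')) \<alpha>' \<longrightarrow> \<alpha> = \<alpha>'"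
    proof (intro allI impI)
      fix v v' \<alpha> \<alpha>'
      assume t1: "twoarr C x c v v' \<alpha>" and t2: "twoarr C x c v v' \<alpha>'"
        and eq: "Cmp C (snd (Cmp C k \<epsilon>, \<epsilon>')) \<alpha> = Cmp C (snd (Cmp C k \<epsilon>, \<epsilon>')) \<alpha>'"
      have "\<alpha> \<in> hom C X0 C1" "\<alpha>' \<in> hom C X0 C1" "Cmp C c \<alpha> = Cmp C c \<alpha>'"
        using t1 t2 unfolding twoarr_def by (auto simp: xd cobj)
      then show "\<alpha> = \<alpha>'" using pb_uniq[OF cat C1_pb] eq by auto
    qed
    show "\<forall>v v' \<beta>. arr1 C x c v \<longrightarrow> arr1 C x c v' \<longrightarrow>
            twoarr C x a (comp1 C (Cmp C k \<epsilon>, \<epsilon>') v) (comp1 C (Cmp C k \<epsilon>, \<epsilon>') v') \<beta> \<longrightarrow>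
            Cmp C (Cmp C \<kappa> \<epsilon>) (fst v) = Add C (Cmp C (Cmp C \<kappa> \<epsilon>) (fst v')) (Cmp C (snd (f0, f1)) \<beta>) \<longrightarrow>
            (\<exists>\<alpha>. twoarr C x c v v' \<alpha> \<and> Cmp C (snd (Cmp C k \<epsilon>, \<epsilon>')) \<alpha> = \<beta>)"
    proof (intro allI impI)
      fix v v' \<beta>
      assume av: "arr1 C x c v" and av': "arr1 C x c v'"
        and tb: "twoarr C x a (comp1 C (Cmp C k \<epsilon>, \<epsilon>') v) (comp1 C (Cmp C k \<epsilon>, \<epsilon>') v') \<beta>"
        and hq: "Cmp C (Cmp C \<kappa> \<epsilon>) (fst v) = Add C (Cmp C (Cmp C \<kappa> \<epsilon>) (fst v')) (Cmp C (snd (f0, f1)) \<beta>)"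
      have v0: "fst v \<in> hom C X0 C0" and v1: "snd v \<in> hom C X1 C1" and vs: "Cmp C c (snd v) = Cmp C (fst v) x"
        using av unfolding arr1_def by (auto simp: xd cobj)
      have v0': "fst v' \<in> hom C X0 C0" and v1': "snd v' \<in> hom C X1 C1" and vs': "Cmp C c (snd v') = Cmp C (fst v') x"
        using av' unfolding arr1_def by (auto simp: xd cobj)
      have bt: "\<beta> \<in> hom C X0 A1"
        and b1: "diff C (Cmp C \<epsilon>' (snd v)) (Cmp C \<epsilon>' (snd v')) = Cmp C \<beta> x"
        and b0: "diff C (Cmp C (Cmp C k \<epsilon>) (fst v)) (Cmp C (Cmp C k \<epsilon>) (fst v')) = Cmp C a \<beta>"
        using tb unfolding twoarr_def comp1_def by (auto simp: xd adom)
      define d0 where "d0 = diff C (fst v) (fst v')"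
      define d1 where "d1 = diff C (snd v) (snd v')"
      have d0: "d0 \<in> hom C X0 C0" unfolding d0_def using diff_hom[OF pa v0 v0'] .
      have d1: "d1 \<in> hom C X1 C1" unfolding d1_def using diff_hom[OF pa v1 v1'] .
      have f1b: "Cmp C f1 \<beta> \<in> hom C X0 B1" using cmp[OF bt f1] .
      have ked: "Cmp C (Cmp C k \<epsilon>) d0 = Cmp C a \<beta>"
        unfolding d0_def using cmp_diff_l[OF pa v0 v0' ke] b0 by simp
      have kapd: "Cmp C (Cmp C \<kappa> \<epsilon>) d0 = Cmp C f1 \<beta>"
        unfolding d0_def using cmp_diff_l[OF pa v0 v0' kape] hq diff_add[OF pa cmp[OF v0' kape] f1b] by simp
      have ed0: "Cmp C \<epsilon> d0 = Cmp C k' \<beta>"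
      proof (rule pb_uniq[OF cat K_pb cmp[OF d0 e] cmp[OF bt k']])
        show "Cmp C k (Cmp C \<epsilon> d0) = Cmp C k (Cmp C k' \<beta>)"
          using ass[OF d0 e k] ked ass[OF bt k' k] k'_1 by simp
        show "Cmp C \<kappa> (Cmp C \<epsilon> d0) = Cmp C \<kappa> (Cmp C k' \<beta>)"
          using ass[OF d0 e kap] kapd ass[OF bt k' kap] k'_2 by simp
      qed
      obtain \<alpha> where al: "\<alpha> \<in> hom C X0 C1" and ca: "Cmp C c \<alpha> = d0" and ea: "Cmp C \<epsilon>' \<alpha> = \<beta>"
        using pb_ex[OF cat C1_pb _ _ ed0] d0 bt e k' unfolding hom_def by auto
      have d1x: "d1 = Cmp C \<alpha> x"
      proof (rule pb_uniq[OF cat C1_pb d1 cmp[OF x al]])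
        show "Cmp C c d1 = Cmp C c (Cmp C \<alpha> x)"
          unfolding d1_def using cmp_diff_l[OF pa v1 v1' c] vs vs' cmp_diff_r[OF pa x v0 v0'] ass[OF x al c] ca d0_def by simp
        show "Cmp C \<epsilon>' d1 = Cmp C \<epsilon>' (Cmp C \<alpha> x)"
          unfolding d1_def using cmp_diff_l[OF pa v1 v1' e'] b1 ass[OF x al e'] ea by simp
      qed
      have "twoarr C x c v v' \<alpha>"
        unfolding twoarr_def using av av' al d1x ca d0_def d1_def by (simp add: xd cobj)
      then show "\<exists>\<alpha>. twoarr C x c v v' \<alpha> \<and> Cmp C (snd (Cmp C k \<epsilon>, \<epsilon>')) \<alpha> = \<beta>" using ea by auto
    qed
    show "\<forall>w \<phi>. arr1 C x a w \<longrightarrow> twoarr C x b (comp1 C (f0, f1) w) (zero1 C x b) \<phi> \<longrightarrow>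
            (\<exists>v \<beta>. arr1 C x c v \<and> twoarr C x a (comp1 C (Cmp C k \<epsilon>, \<epsilon>') v) w \<beta> \<and>
               Cmp C (Cmp C \<kappa> \<epsilon>) (fst v) = Add C \<phi> (Cmp C (snd (f0, f1)) \<beta>))"
    proof (intro allI impI)
      fix w \<phi>
      assume aw: "arr1 C x a w" and tp: "twoarr C x b (comp1 C (f0, f1) w) (zero1 C x b) \<phi>"
      have w0: "fst w \<in> hom C X0 A0" and w1: "snd w \<in> hom C X1 A1" and ws: "Cmp C a (snd w) = Cmp C (fst w) x"
        using aw unfolding arr1_def by (auto simp: xd adom)
      have ph: "\<phi> \<in> hom C X0 B1"
        and p1: "diff C (Cmp C f1 (snd w)) (Zer C X1 B1) = Cmp C \<phi> x"
        and p0: "diff C (Cmp C f0 (fst w)) (Zer C X0 B0) = Cmp C b \<phi>"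
        using tp unfolding twoarr_def comp1_def zero1_def by (auto simp: xd adom)
      have p1': "Cmp C f1 (snd w) = Cmp C \<phi> x" using p1 diff_zer[OF pa cmp[OF w1 f1]] by simp
      have p0': "Cmp C f0 (fst w) = Cmp C b \<phi>" using p0 diff_zer[OF pa cmp[OF w0 f0]] by simp
      obtain g where g: "g \<in> hom C X0 K" and kg: "Cmp C k g = fst w" and kapg: "Cmp C \<kappa> g = \<phi>"
        using pb_ex[OF cat K_pb _ _ p0'] w0 ph f0 b unfolding hom_def by auto
      obtain v0 where v0: "v0 \<in> hom C X0 C0" and ev0: "Cmp C \<epsilon> v0 = g"
        using X0p e \<epsilon>_epi g unfolding projective_def by blast
      have eq: "Cmp C \<epsilon> (Cmp C v0 x) = Cmp C k' (snd w)"
      proof (rule pb_uniq[OF cat K_pb cmp[OF cmp[OF x v0] e] cmp[OF w1 k']])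
        show "Cmp C k (Cmp C \<epsilon> (Cmp C v0 x)) = Cmp C k (Cmp C k' (snd w))"
          using ass[OF x v0 e] ev0 ass[OF x g k] kg ws ass[OF w1 k' k] k'_1 by simp
        show "Cmp C \<kappa> (Cmp C \<epsilon> (Cmp C v0 x)) = Cmp C \<kappa> (Cmp C k' (snd w))"
          using ass[OF x v0 e] ev0 ass[OF x g kap] kapg p1' ass[OF w1 k' kap] k'_2 by simp
      qed
      obtain v1 where v1: "v1 \<in> hom C X1 C1" and cv1: "Cmp C c v1 = Cmp C v0 x" and ev1: "Cmp C \<epsilon>' v1 = snd w"
        using pb_ex[OF cat C1_pb _ _ eq] cmp[OF x v0] w1 e k' unfolding hom_def by auto
      have kev: "Cmp C (Cmp C k \<epsilon>) v0 = fst w" using ass[OF v0 e k] ev0 kg by simp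
      have cw: "comp1 C (Cmp C k \<epsilon>, \<epsilon>') (v0, v1) = w" unfolding comp1_def using kev ev1 by simp
      have z: "Zer C X0 A1 \<in> hom C X0 A1" using pa_zer[OF pa XO(1) Obs(2)] .
      have avv: "arr1 C x c (v0, v1)" unfolding arr1_def obj1_def using xo H1 v0 v1 cv1
        unfolding obj1c_def by (simp add: xd cobj)
      have tw: "twoarr C x a (comp1 C (Cmp C k \<epsilon>, \<epsilon>') (v0, v1)) w (Zer C X0 A1)"
        unfolding cw twoarr_def using aw z diff_self[OF pa w1] diff_self[OF pa w0]
          cmp_zer_l[OF pa x Obs(2)] cmp_zer_r[OF pa a XO(1)] by (simp add: xd adom)
      have last: "Cmp C (Cmp C \<kappa> \<epsilon>) (fst (v0, v1)) = Add C \<phi> (Cmp C (snd (f0, f1)) (Zer C X0 A1))"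
        using ass[OF v0 e kap] ev0 kapg cmp_zer_r[OF pa f1 XO(1)] pa_z[OF pa ph] by simp
      show "\<exists>v \<beta>. arr1 C x c v \<and> twoarr C x a (comp1 C (Cmp C k \<epsilon>, \<epsilon>') v) w \<beta> \<and>
               Cmp C (Cmp C \<kappa> \<epsilon>) (fst v) = Add C \<phi> (Cmp C (snd (f0, f1)) \<beta>)"
        using avv tw last by blast
    qed
  qed
  have H4: "is_2kernel_c C a b (f0, f1) c (Cmp C k \<epsilon>, \<epsilon>') (Cmp C \<kappa> \<epsilon>)"
    unfolding is_2kernel_c_def using a_obj b_obj f_arr H1 H2 H3 FA by blast
  show ?thesis using H1 H2 H3 H4 by blast
qed
end
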